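(* Let $N\ge 3$, $1\le p\le\infty$, $\alpha\in\mathbb{R}$ and $\beta=2-\alpha+N(1-\frac2p)$. The inequality $\||x|^\alpha\Delta u\|_p\ge C\||x|^{\alpha-2}u\|_p$ holds for all $u\in C_c^\infty(\mathbb{R}^N\setminus\{0\})$ with some $C>0$ if and only if $\||x|^\beta\Delta u\|_p\ge C\||x|^{\beta-2}u\|_p$ holds for all $u\in C_c^\infty(\mathbb{R}^N\setminus\{0\})$ with some $C>0$. Moreover, the best constants in the two inequalities coincide.
   Context: Norms are $L^p(\mathbb{R}^N)$ norms (sup norm for $p=\infty$); the best constant is the largest $C\ge0$ for which the inequality holds for all such $u$. *)

theory Defs
  imports "HOL-Analysis.Analysis"
begin

definition partial :: "'n::finite \<Rightarrow> (real^'n \<Rightarrow> real) \<Rightarrow> real^'n \<Rightarrow> real" where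
  "partial i f x = deriv (\<lambda>t. f (x + t *\<^sub>R axis i 1)) 0"

fun iter_partial :: "'n::finite list \<Rightarrow> (real^'n \<Rightarrow> real) \<Rightarrow> real^'n \<Rightarrow> real" where
  "iter_partial [] f = f"
| "iter_partial (i # is) f = partial i (iter_partial is f)"

definition smooth :: "(real^'n::finite \<Rightarrow> real) \<Rightarrow> bool" where
  "smooth f \<longleftrightarrow> (\<forall>is x. iter_partial is f differentiable (at x))"

definition tsupport :: "(real^'n::finite \<Rightarrow> real) \<Rightarrow> (real^'n) set" where
  "tsupport f = closure {x. f x \<noteq> 0}"

definition test_fun :: "(real^'n::finite \<Rightarrow> real) \<Rightarrow> bool" where
  "test_fun u \<longleftrightarrow> smooth u \<and> compact (tsupport u) \<and> 0 \<notin> tsupport u"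

definition laplacian :: "(real^'n::finite \<Rightarrow> real) \<Rightarrow> real^'n \<Rightarrow> real" where
  "laplacian u x = (\<Sum>i\<in>UNIV. partial i (partial i u) x)"

definition Lp_norm :: "ereal \<Rightarrow> (real^'n::finite \<Rightarrow> real) \<Rightarrow> real" where
  "Lp_norm p f = (if p = \<infinity> then (SUP x. \<bar>f x\<bar>)
     else (LINT x|lborel. \<bar>f x\<bar> powr real_of_ereal p) powr (1 / real_of_ereal p))"

definition rellich_ineq :: "'n::finite itself \<Rightarrow> ereal \<Rightarrow> real \<Rightarrow> real \<Rightarrow> bool" where
  "rellich_ineq _ p a C \<longleftrightarrow> (\<forall>u::real^'n \<Rightarrow> real. test_fun u \<longrightarrow>
      Lp_norm p (\<lambda>x. norm x powr a * laplacian u x) \<ge> C * Lp_norm p (\<lambda>x. norm x powr (a - 2) * u x))"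

definition best_const :: "'n::finite itself \<Rightarrow> ereal \<Rightarrow> real \<Rightarrow> real" where
  "best_const n p a = Sup {C. C \<ge> 0 \<and> rellich_ineq n p a C}"

end

theory Submission
  imports Defs
begin


lemma prod_Basis_cart: "(\<Prod>b\<in>Basis. (v::real^'n::finite) \<bullet> b) = (\<Prod>i\<in>UNIV. v$i)"
  by (simp add: Basis_vec_def cart_eq_inner_axis axis_eq_axis prod.UNION_disjoint)

typedef 'n wo = "UNIV :: 'n set" by auto

instantiation wo :: (finite) linorder
begin
definition less_eq_wo :: "'a wo \<Rightarrow> 'a wo \<Rightarrow> bool" where
  "less_eq_wo a b = (to_nat (Rep_wo a) \<le> to_nat (Rep_wo b))"
definition less_wo :: "'a wo \<Rightarrow> 'a wo \<Rightarrow> bool" where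
  "less_wo a b = (to_nat (Rep_wo a) < to_nat (Rep_wo b))"
instance
  by standard (auto simp: less_eq_wo_def less_wo_def Rep_wo_inject)
end

instance wo :: (finite) finite
proof
  have "(UNIV :: 'a wo set) = Abs_wo ` UNIV"
    by (metis Abs_wo_cases UNIV_eq_I rangeI)
  then show "finite (UNIV :: 'a wo set)" by (metis finite finite_imageI)
qed

instance wo :: (finite) wellorder
proof
  fix P :: "'a wo \<Rightarrow> bool" and a :: "'a wo"
  assume H: "\<And>x. (\<And>y. y < x \<Longrightarrow> P y) \<Longrightarrow> P x"
  have "\<forall>x. to_nat (Rep_wo x) = n \<longrightarrow> P x" for n
  proof (induction n rule: less_induct)
    case (less n)
    then show ?case using H by (auto simp: less_wo_def)
  qed
  then show "P a" by blast
qed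

definition phi :: "real^'n::finite \<Rightarrow> real^('n wo)" where
  "phi x = (\<chi> j. x $ Rep_wo j)"

lemma phi_component: "phi x $ j = x $ Rep_wo j"
  by (simp add: phi_def)

lemma phi_linear: "linear phi"
  by (auto simp: linear_iff phi_def vec_eq_iff)

lemma norm_phi: "norm (phi x) = norm x"
proof -
  have "(\<Sum>j\<in>UNIV. (x $ Rep_wo j)^2) = (\<Sum>i\<in>UNIV. (x $ i)^2)"
    by (rule sum.reindex_bij_betw) (auto simp: bij_betw_def inj_on_def Rep_wo_inject intro: Rep_wo_cases Abs_wo_inverse image_eqI[where x="Abs_wo _"])
  then show ?thesis by (simp add: norm_vec_def L2_set_def phi_def)
qed



definition inv_pt :: "real^'a::finite \<Rightarrow> real^'a" where
  "inv_pt x = (1 / (norm x)^2) *\<^sub>R x"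

lemma norm_inv_pt: "norm (inv_pt x) = 1 / norm x"
  by (cases "x = 0") (auto simp: inv_pt_def power2_eq_square)

lemma inv_pt_inv_pt[simp]: "inv_pt (inv_pt x) = x"
  by (cases "x = 0") (auto simp: inv_pt_def norm_inv_pt power2_eq_square)

lemma inv_pt_0[simp]: "inv_pt 0 = 0" by (simp add: inv_pt_def)

lemma inv_pt_eq_0[simp]: "inv_pt x = 0 \<longleftrightarrow> x = 0" by (auto simp: inv_pt_def)

definition hmap :: "real^'a::finite \<Rightarrow> real^'a \<Rightarrow> real^'a" where
  "hmap x h = h - (2 * (x \<bullet> h) / (norm x)^2) *\<^sub>R x"

lemma linear_hmap: "linear (hmap x)"
proof (rule linearI)
  fix a b :: "real^'a"
  show "hmap x (a + b) = hmap x a + hmap x b"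
    unfolding hmap_def inner_add_right add_divide_distrib distrib_left scaleR_add_left by simp
next
  fix c :: real and a :: "real^'a"
  show "hmap x (c *\<^sub>R a) = c *\<^sub>R hmap x a"
    unfolding hmap_def inner_scaleR_right scaleR_diff_right scaleR_scaleR by (simp add: mult.left_commute)
qed

lemma hmap_hmap: "x \<noteq> 0 \<Longrightarrow> hmap x (hmap x h) = h"
proof -
  assume x: "x \<noteq> 0"
  have "x \<bullet> hmap x h = - (x \<bullet> h)"
    using x by (simp add: hmap_def inner_diff_right power2_norm_eq_inner[symmetric] field_simps)
  then have "hmap x (hmap x h) = hmap x h + (2 * (x \<bullet> h) / (norm x)^2) *\<^sub>R x"
    by (simp add: hmap_def[of x "hmap x h"])
  also have "\<dots> = h" by (simp add: hmap_def)
  finally show ?thesis .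
qed

lemma inv_pt_has_derivative:
  assumes x: "x \<noteq> 0"
  shows "(inv_pt has_derivative (\<lambda>h. (1 / (norm x)^2) *\<^sub>R hmap x h)) (at x)"
proof -
  have eq: "inv_pt = (\<lambda>x. inverse (x \<bullet> x) *\<^sub>R x)"
    by (auto simp: inv_pt_def power2_norm_eq_inner divide_inverse fun_eq_iff)
  have xx: "x \<bullet> x \<noteq> 0" using x by simp
  have d1: "((\<lambda>x. x \<bullet> x) has_derivative (\<lambda>h. x \<bullet> h + h \<bullet> x)) (at x)"
    using has_derivative_inner[OF has_derivative_ident has_derivative_ident, of x UNIV] by simp
  have d2: "((\<lambda>x. inverse (x \<bullet> x)) has_derivative (\<lambda>h. - (inverse (x \<bullet> x) * (x \<bullet> h + h \<bullet> x) * inverse (x \<bullet> x)))) (at x)"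
    by (rule Deriv.has_derivative_inverse[OF xx d1])
  have d3: "((\<lambda>x. inverse (x \<bullet> x) *\<^sub>R x) has_derivative
     (\<lambda>h. inverse (x \<bullet> x) *\<^sub>R h + (- (inverse (x \<bullet> x) * (x \<bullet> h + h \<bullet> x) * inverse (x \<bullet> x))) *\<^sub>R x)) (at x)"
    by (rule has_derivative_scaleR[OF d2 has_derivative_ident])
  show ?thesis unfolding eq
    apply (rule has_derivative_eq_rhs[OF d3])
  proof (rule ext)
    fix h
    have e: "h \<bullet> x = x \<bullet> h" by (rule inner_commute)
    have "2 * (x \<bullet> h) / (x \<bullet> x) / (x \<bullet> x) = inverse (x \<bullet> x) * (x \<bullet> h + x \<bullet> h) * inverse (x \<bullet> x)"
      by (simp add: divide_inverse)
    then show "inverse (x \<bullet> x) *\<^sub>R h + (- (inverse (x \<bullet> x) * (x \<bullet> h + h \<bullet> x) * inverse (x \<bullet> x))) *\<^sub>R x =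
         (1 / (norm x)^2) *\<^sub>R hmap x h"
      unfolding hmap_def power2_norm_eq_inner e scaleR_diff_right scaleR_scaleR
      by (simp add: divide_inverse mult.commute mult.left_commute)
  qed
qed

lemma abs_one_of_sq: "(d::real) * d = 1 \<Longrightarrow> \<bar>d\<bar> = 1"
  by (cases "d \<ge> 0") (auto simp: power2_eq_1_iff[unfolded power2_eq_square])

lemma det_inv_deriv:
  fixes x :: "real^'a::finite"
  assumes x: "x \<noteq> 0"
  shows "\<bar>det (matrix (\<lambda>h. (1 / (norm x)^2) *\<^sub>R hmap x h))\<bar> = norm x powr (- 2 * real CARD('a))"
proof -
  have lin_s: "linear ((*\<^sub>R) (1 / (norm x)^2) :: real^'a \<Rightarrow> real^'a)"
    by (simp add: linear_scaleR)
  have eq: "(\<lambda>h. (1 / (norm x)^2) *\<^sub>R hmap x h) = (*\<^sub>R) (1 / (norm x)^2) \<circ> hmap x"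
    by (simp add: o_def)
  have "det (matrix (hmap x)) * det (matrix (hmap x)) = det (matrix (hmap x \<circ> hmap x))"
    by (simp add: matrix_compose[OF linear_hmap linear_hmap] det_mul)
  also have "hmap x \<circ> hmap x = id" using hmap_hmap[OF x] by (simp add: fun_eq_iff)
  finally have "det (matrix (hmap x)) * det (matrix (hmap x)) = 1" by (simp only: matrix_id)
  then have d1: "\<bar>det (matrix (hmap x))\<bar> = 1"
    by (rule abs_one_of_sq)
  have "\<bar>det (matrix (\<lambda>h. (1 / (norm x)^2) *\<^sub>R hmap x h))\<bar> = (1 / (norm x)^2) ^ CARD('a)"
    unfolding eq matrix_compose[OF linear_hmap lin_s] det_mul det_matrix_scaleR abs_mult d1
    by simp
  also have "\<dots> = norm x powr (- 2 * real CARD('a))"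
  proof -
    have r: "norm x > 0" using x by simp
    have "1 / (norm x)^2 = norm x powr (-2)"
      using r by (simp add: powr_minus_divide powr_numeral)
    then have "(1 / (norm x)^2) ^ CARD('a) = (norm x powr (-2)) ^ CARD('a)" by simp
    also have "\<dots> = norm x powr (- 2 * real CARD('a))"
      using r by (simp add: powr_realpow[symmetric] powr_powr)
    finally show ?thesis .
  qed
  finally show ?thesis .
qed



lemma inv_pt_measurable[measurable]: "inv_pt \<in> borel_measurable borel"
  unfolding inv_pt_def by measurable

lemma singleton0_null: "{0::real^'a::finite} \<in> null_sets lborel"
  by (simp add: countable_imp_null_set_lborel)

lemma img_inv_pt: "inv_pt ` (inv_pt -` A - {0}) = A - {0}"
proof
  show "inv_pt ` (inv_pt -` A - {0}) \<subseteq> A - {0}" by auto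
  show "A - {0} \<subseteq> inv_pt ` (inv_pt -` A - {0})"
  proof
    fix y assume "y \<in> A - {0}"
    then have "inv_pt y \<in> inv_pt -` A - {0}" "y = inv_pt (inv_pt y)" by auto
    then show "y \<in> inv_pt ` (inv_pt -` A - {0})" by blast
  qed
qed

lemma distr_inv_wo:
  "distr (density lborel (\<lambda>x. ennreal (norm x powr (- 2 * real CARD('m))))) borel inv_pt
     = (lborel :: (real^'m::{finite,wellorder}) measure)"
proof (rule lborel_eqI[symmetric])
  let ?w = "\<lambda>x::real^'m::{finite,wellorder}. ennreal (norm x powr (- 2 * real CARD('m)))"
  fix l u :: "real^'m::{finite,wellorder}"
  assume le: "\<And>b. b \<in> Basis \<Longrightarrow> l \<bullet> b \<le> u \<bullet> b"
  have wm: "?w \<in> borel_measurable lborel" by measurable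
  define S where "S = inv_pt -` box l u - {0}"
  have pre: "inv_pt -` box l u \<in> sets borel"
    using measurable_sets[OF inv_pt_measurable, of "box l u"] by simp
  then have Sb: "S \<in> sets borel" unfolding S_def by (intro sets.Diff) auto
  then have SL: "S \<in> sets lebesgue" by simp
  have img: "inv_pt ` S = box l u - {0}"
    unfolding S_def by (rule img_inv_pt)
  have der: "\<And>x. x \<in> S \<Longrightarrow> (inv_pt has_derivative (\<lambda>h. (1 / (norm x)^2) *\<^sub>R hmap x h)) (at x within S)"
    using inv_pt_has_derivative has_derivative_at_withinI unfolding S_def by blast
  have inj: "inj_on inv_pt S" by (rule inj_on_inverseI[where g=inv_pt]) simp
  have bl: "box l u - {0} \<in> sets lborel" by simp
  have ml: "measure lebesgue (box l u - {0}) = measure lborel (box l u)"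
    using measure_completion[OF bl] measure_Diff_null_set[of "box l u" lborel "{0}"] singleton0_null
    by simp
  have "box l u - {0} \<in> lmeasurable" by (simp add: fmeasurable_Diff)
  then have hi: "((\<lambda>x. \<bar>det (matrix (\<lambda>h. (1 / (norm x)^2) *\<^sub>R hmap x h))\<bar>) has_integral measure lborel (box l u)) S"
    using has_measure_differentiable_image[OF SL der inj, of "measure lborel (box l u)"] img ml by simp
  have hi2: "((\<lambda>x. norm x powr (- 2 * real CARD('m))) has_integral measure lborel (box l u)) S"
    by (rule has_integral_eq[OF _ hi]) (simp add: S_def det_inv_deriv)
  have nn: "(\<integral>\<^sup>+x\<in>S. ?w x \<partial>lborel) = ennreal (measure lborel (box l u))"
    by (rule nn_integral_has_integral_lebesgue'[OF _ hi2]) simp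
  have "emeasure (distr (density lborel ?w) borel inv_pt) (box l u) = emeasure (density lborel ?w) (inv_pt -` box l u)"
    by (simp add: emeasure_distr)
  also have "\<dots> = (\<integral>\<^sup>+x\<in>inv_pt -` box l u. ?w x \<partial>lborel)"
    by (rule emeasure_density[OF wm]) (use pre in simp)
  also have "\<dots> = (\<integral>\<^sup>+x\<in>S. ?w x \<partial>lborel)"
  proof (rule nn_integral_cong_AE)
    have "AE x in lborel. (x::real^'m::{finite,wellorder}) \<noteq> 0"
      using AE_not_in[OF singleton0_null] by simp
    then show "AE x in lborel. ?w x * indicator (inv_pt -` box l u) x = ?w x * indicator S x"
      by eventually_elim (auto simp: S_def indicator_def)
  qed
  also have "\<dots> = emeasure lborel (box l u)"
  proof -
    have "emeasure lborel (box l u) = ennreal (measure lborel (box l u))"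
      using emeasure_lborel_box_finite[of l u] by (intro emeasure_eq_ennreal_measure) auto
    then show ?thesis using nn by simp
  qed
  also have "\<dots> = (\<Prod>b\<in>Basis. (u - l) \<bullet> b)"
    using le by (simp add: emeasure_lborel_box_eq)
  finally show "emeasure (distr (density lborel ?w) borel inv_pt) (box l u) = (\<Prod>b\<in>Basis. (u - l) \<bullet> b)" .
qed simp



definition psi :: "real^('n::finite wo) \<Rightarrow> real^'n" where
  "psi y = (\<chi> i. y $ Abs_wo i)"

lemma psi_phi[simp]: "psi (phi x) = x"
  by (simp add: psi_def phi_def Abs_wo_inverse vec_eq_iff)

lemma phi_psi[simp]: "phi (psi y) = y"
  by (simp add: psi_def phi_def Rep_wo_inverse vec_eq_iff)

lemma norm_psi: "norm (psi y) = norm y"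
  by (metis norm_phi phi_psi)

lemma psi_scaleR: "psi (c *\<^sub>R y) = c *\<^sub>R psi y"
  by (simp add: psi_def vec_eq_iff)

lemma inv_pt_psi: "inv_pt (psi y) = psi (inv_pt y)"
  by (simp add: inv_pt_def norm_psi psi_scaleR)

lemma phi_measurable[measurable]: "phi \<in> borel_measurable borel"
  by (intro borel_measurable_continuous_onI linear_continuous_on phi_linear[unfolded linear_conv_bounded_linear])

lemma psi_linear: "linear psi"
  by (auto simp: linear_iff psi_def vec_eq_iff)

lemma psi_measurable[measurable]: "psi \<in> borel_measurable borel"
  by (intro borel_measurable_continuous_onI linear_continuous_on psi_linear[unfolded linear_conv_bounded_linear])

lemma distr_phi: "distr lborel borel (phi :: real^'n::finite \<Rightarrow> _) = lborel"
proof (rule lborel_eqI[symmetric])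
  fix l u :: "real^('n wo)"
  assume le: "\<And>b. b \<in> Basis \<Longrightarrow> l \<bullet> b \<le> u \<bullet> b"
  have le': "\<And>i. l $ i \<le> u $ i"
    using le[of "axis _ 1"] by (simp add: Basis_vec_def cart_eq_inner_axis) (metis axis_in_Basis_iff cart_eq_inner_axis le Basis_real_def insertI1)
  have pre: "phi -` box l u = box (psi l) (psi u)"
    by (auto simp: mem_box_cart phi_def psi_def) (metis Abs_wo_inverse UNIV_I Rep_wo_inverse)+
  have le2: "\<And>b. b \<in> Basis \<Longrightarrow> psi l \<bullet> b \<le> psi u \<bullet> b"
    using le' by (auto simp: Basis_vec_def inner_axis psi_def)
  have "emeasure (distr lborel borel phi) (box l u) = emeasure lborel (phi -` box l u)"
    by (simp add: emeasure_distr)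
  also have "\<dots> = ennreal (\<Prod>b\<in>Basis. (psi u - psi l) \<bullet> b)"
    unfolding pre by (rule emeasure_lborel_box[OF le2])
  also have "(\<Prod>b\<in>Basis. (psi u - psi l) \<bullet> b) = (\<Prod>i\<in>UNIV. u $ Abs_wo i - l $ Abs_wo i)"
    by (simp add: prod_Basis_cart psi_def)
  also have "\<dots> = (\<Prod>j\<in>UNIV. u $ j - l $ j)"
    by (rule prod.reindex_bij_betw) (auto simp: bij_betw_def inj_on_def Abs_wo_inject intro: Abs_wo_cases image_eqI[where x="Rep_wo _"] Rep_wo_inverse[symmetric])
  also have "\<dots> = (\<Prod>b\<in>Basis. (u - l) \<bullet> b)"
    by (simp add: prod_Basis_cart)
  finally show "emeasure (distr lborel borel phi) (box l u) = (\<Prod>b\<in>Basis. (u - l) \<bullet> b)" .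
qed simp

lemma nn_transfer:
  fixes F :: "real^'n::finite \<Rightarrow> ennreal"
  assumes [measurable]: "F \<in> borel_measurable borel"
  shows "(\<integral>\<^sup>+x. F x \<partial>lborel) = (\<integral>\<^sup>+y. F (psi y) \<partial>lborel)"
proof -
  have "(\<integral>\<^sup>+y. F (psi y) \<partial>lborel) = (\<integral>\<^sup>+y. F (psi y) \<partial>distr lborel borel (phi :: real^'n \<Rightarrow> _))"
    by (simp add: distr_phi)
  also have "\<dots> = (\<integral>\<^sup>+x. F (psi (phi x)) \<partial>lborel)"
    by (rule nn_integral_distr) auto
  finally show ?thesis by simp
qed

lemma kelvin_nn:
  fixes g :: "real^'n::finite \<Rightarrow> ennreal"
  assumes [measurable]: "g \<in> borel_measurable borel"
  shows "(\<integral>\<^sup>+x. ennreal (norm x powr (- 2 * real CARD('n))) * g (inv_pt x) \<partial>lborel) = (\<integral>\<^sup>+x. g x \<partial>lborel)"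
proof -
  let ?w = "\<lambda>y::real^('n wo). ennreal (norm y powr (- 2 * real CARD('n wo)))"
  have card: "CARD('n wo) = CARD('n)"
    by (metis (mono_tags) Rep_wo_inverse UNIV_I bij_betw_def bij_betw_same_card inj_on_def type_definition.Rep_range type_definition_wo)
  have "(\<integral>\<^sup>+x. ennreal (norm x powr (- 2 * real CARD('n))) * g (inv_pt x) \<partial>lborel)
     = (\<integral>\<^sup>+y. ennreal (norm (psi y) powr (- 2 * real CARD('n))) * g (inv_pt (psi y)) \<partial>lborel)"
    by (rule nn_transfer) measurable
  also have "\<dots> = (\<integral>\<^sup>+y. ?w y * (g \<circ> psi) (inv_pt y) \<partial>lborel)"
    by (simp add: norm_psi inv_pt_psi card)
  also have "\<dots> = (\<integral>\<^sup>+y. (g \<circ> psi) (inv_pt y) \<partial>density lborel ?w)"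
    by (rule nn_integral_density[symmetric]) auto
  also have "\<dots> = (\<integral>\<^sup>+y. (g \<circ> psi) y \<partial>distr (density lborel ?w) borel inv_pt)"
    by (rule nn_integral_distr[symmetric]) auto
  also have "\<dots> = (\<integral>\<^sup>+y. g (psi y) \<partial>lborel)"
    unfolding distr_inv_wo by simp
  also have "\<dots> = (\<integral>\<^sup>+x. g x \<partial>lborel)"
    by (rule nn_transfer[symmetric]) measurable
  finally show ?thesis .
qed



lemma sum_axis_left: "(\<Sum>j\<in>UNIV. axis i (1::real) $ j * c j) = c i"
proof -
  have "(\<Sum>j\<in>UNIV. axis i (1::real) $ j * c j) = (\<Sum>j\<in>UNIV. if j = i then c j else 0)"
    by (rule sum.cong) (auto simp: axis_def)
  then show ?thesis by simp
qed

lemma partial_has_derivative: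
  assumes "(f has_derivative f') (at x)"
  shows "partial i f x = f' (axis i 1)"
proof -
  have g: "((\<lambda>t::real. x + t *\<^sub>R axis i 1) has_derivative (\<lambda>t. t *\<^sub>R axis i 1)) (at 0)"
    by (auto intro!: derivative_eq_intros)
  have f': "(f has_derivative f') (at (x + 0 *\<^sub>R axis i 1))" using assms by simp
  have lin: "linear f'" using assms has_derivative_linear by blast
  have "((\<lambda>t. f (x + t *\<^sub>R axis i 1)) has_derivative (\<lambda>t. f' (t *\<^sub>R axis i 1))) (at 0)"
    using has_derivative_compose[OF g f'] by (simp add: o_def)
  moreover have "(\<lambda>t. f' (t *\<^sub>R axis i 1)) = (*) (f' (axis i 1))"
    using lin by (simp add: linear_scale fun_eq_iff)
  ultimately have "((\<lambda>t. f (x + t *\<^sub>R axis i 1)) has_field_derivative f' (axis i 1)) (at 0)"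
    by (simp add: has_field_derivative_def mult.commute)
  then show ?thesis unfolding partial_def by (rule DERIV_imp_deriv)
qed

lemma partial_cong:
  assumes U: "open U" "x \<in> U" and eq: "\<And>y. y \<in> U \<Longrightarrow> f y = g y"
  shows "partial i f x = partial i g x"
proof -
  obtain e where e: "e > 0" "ball x e \<subseteq> U" using U open_contains_ball by blast
  have ev: "\<forall>\<^sub>F t in nhds 0. f (x + t *\<^sub>R axis i 1) = g (x + t *\<^sub>R axis i 1)"
    unfolding eventually_nhds_metric
  proof (intro exI[of _ e] conjI allI impI)
    fix t :: real assume "dist t 0 < e"
    then have "x + t *\<^sub>R axis i 1 \<in> ball x e" by (simp add: dist_norm)
    then show "f (x + t *\<^sub>R axis i 1) = g (x + t *\<^sub>R axis i 1)" using e eq by blast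
  qed (use e in auto)
  have "\<And>D. ((\<lambda>t. f (x + t *\<^sub>R axis i 1)) has_field_derivative D) (at 0) \<longleftrightarrow>
            ((\<lambda>t. g (x + t *\<^sub>R axis i 1)) has_field_derivative D) (at 0)"
    by (rule DERIV_cong_ev[OF refl ev refl])
  then show ?thesis unfolding partial_def deriv_def by simp
qed

lemma differentiable_partials:
  assumes "f differentiable (at x)"
  shows "(f has_derivative (\<lambda>h. \<Sum>j\<in>UNIV. h $ j * partial j f x)) (at x)"
proof -
  obtain f' where f': "(f has_derivative f') (at x)" using assms differentiable_def by blast
  have lin: "linear f'" using f' has_derivative_linear by blast
  have "f' h = (\<Sum>j\<in>UNIV. h $ j * partial j f x)" for h
  proof -
    have "f' h = f' (\<Sum>j\<in>UNIV. h $ j *\<^sub>R axis j 1)"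
      using basis_expansion[of h] by (simp add: scalar_mult_eq_scaleR)
    also have "\<dots> = (\<Sum>j\<in>UNIV. h $ j * f' (axis j 1))"
      using lin by (simp add: linear_sum linear_scale)
    finally show ?thesis using partial_has_derivative[OF f'] by simp
  qed
  then have "f' = (\<lambda>h. \<Sum>j\<in>UNIV. h $ j * partial j f x)" by (rule ext)
  then show ?thesis using f' by simp
qed

lemma partial_mult:
  assumes "f differentiable (at x)" "g differentiable (at x)"
  shows "partial i (\<lambda>x. f x * g x) x = partial i f x * g x + f x * partial i g x"
  using partial_has_derivative[OF has_derivative_mult[OF differentiable_partials[OF assms(1)] differentiable_partials[OF assms(2)]], of i]
  by (simp add: sum_axis_left)

lemma partial_add:
  assumes "f differentiable (at x)" "g differentiable (at x)"
  shows "partial i (\<lambda>x. f x + g x) x = partial i f x + partial i g x"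
  using partial_has_derivative[OF has_derivative_add[OF differentiable_partials[OF assms(1)] differentiable_partials[OF assms(2)]], of i]
  by (simp add: sum_axis_left)

lemma partial_diff:
  assumes "f differentiable (at x)" "g differentiable (at x)"
  shows "partial i (\<lambda>x. f x - g x) x = partial i f x - partial i g x"
  using partial_has_derivative[OF has_derivative_diff[OF differentiable_partials[OF assms(1)] differentiable_partials[OF assms(2)]], of i]
  by (simp add: sum_axis_left)

lemma partial_const: "partial i (\<lambda>x. c) x = 0"
  using partial_has_derivative[OF has_derivative_const, of i c x] by simp

lemma partial_coord: "partial i (\<lambda>x. x $ j) x = (if j = i then 1 else 0)"
proof -
  have "((\<lambda>x::real^'a. x $ j) has_derivative (\<lambda>h. h $ j)) (at x)"
    by (rule bounded_linear_imp_has_derivative) (rule bounded_linear_vec_nth)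
  then show ?thesis by (simp add: partial_has_derivative axis_def)
qed

lemma partial_sum:
  assumes "finite S" "\<And>k. k \<in> S \<Longrightarrow> f k differentiable (at x)"
  shows "partial i (\<lambda>x. \<Sum>k\<in>S. f k x) x = (\<Sum>k\<in>S. partial i (f k) x)"
proof -
  have "((\<lambda>x. \<Sum>k\<in>S. f k x) has_derivative (\<lambda>h. \<Sum>k\<in>S. (\<Sum>j\<in>UNIV. h $ j * partial j (f k) x))) (at x)"
    by (rule has_derivative_sum) (use assms differentiable_partials in auto)
  from partial_has_derivative[OF this, of i] show ?thesis by (simp add: sum_axis_left)
qed



lemma powr_has_derivative_norm:
  fixes x :: "real^'a::finite"
  assumes x: "x \<noteq> 0"
  shows "((\<lambda>x. norm x powr s) has_derivative (\<lambda>h. (s * norm x powr s / norm x) * (h \<bullet> sgn x))) (at x)"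
proof -
  have r: "norm x > 0" using x by simp
  have d: "((\<lambda>r. r powr s) has_real_derivative (s * norm x powr s / norm x)) (at (norm x))"
    by (rule DERIV_powr[THEN DERIV_cong]) (use r in \<open>auto intro!: derivative_eq_intros\<close>)
  have d': "((\<lambda>r. r powr s) has_derivative (*) (s * norm x powr s / norm x)) (at (norm x))"
    using d by (simp add: has_field_derivative_def)
  from has_derivative_compose[OF has_derivative_norm[OF x] d']
  show ?thesis by (simp add: o_def)
qed

lemma partial_powr:
  fixes x :: "real^'a::finite"
  assumes x: "x \<noteq> 0"
  shows "partial i (\<lambda>x. norm x powr s) x = s * norm x powr (s - 2) * x $ i"
proof -
  have r: "norm x > 0" using x by simp
  have "partial i (\<lambda>x. norm x powr s) x = s * norm x powr s / norm x * (axis i 1 \<bullet> sgn x)"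
    by (rule partial_has_derivative[OF powr_has_derivative_norm[OF x]])
  also have "axis i 1 \<bullet> sgn x = x $ i / norm x"
    by (simp add: sgn_div_norm inner_axis' divide_inverse mult.commute)
  also have "s * norm x powr s / norm x * (x $ i / norm x) = s * (norm x powr s / (norm x)^2) * x $ i"
    by (simp add: power2_eq_square)
  also have "norm x powr s / (norm x)^2 = norm x powr (s - 2)"
    using r by (simp add: powr_diff powr_numeral)
  finally show ?thesis .
qed

lemma differentiable_powr_norm:
  fixes x :: "real^'a::finite"
  shows "x \<noteq> 0 \<Longrightarrow> (\<lambda>x. norm x powr s) differentiable (at x)"
  using powr_has_derivative_norm differentiable_def by blast

lemma differentiable_coord: "(\<lambda>x::real^'a::finite. x $ j) differentiable (at x)"
  using bounded_linear_imp_differentiable bounded_linear_vec_nth by blast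

lemma differentiable_inv_pt: "x \<noteq> 0 \<Longrightarrow> inv_pt differentiable (at x)"
  using inv_pt_has_derivative differentiable_def by blast

lemma differentiable_comp_inv_pt:
  "x \<noteq> 0 \<Longrightarrow> w differentiable (at (inv_pt x)) \<Longrightarrow> (\<lambda>x. w (inv_pt x)) differentiable (at x)"
  by (rule differentiable_compose) (auto intro: differentiable_inv_pt)

lemma partial_comp_inv_pt:
  fixes x :: "real^'a::finite"
  assumes x: "x \<noteq> 0" and w: "w differentiable (at (inv_pt x))"
  shows "partial i (\<lambda>x. w (inv_pt x)) x =
     norm x powr (-2) * partial i w (inv_pt x) - 2 * x $ i * norm x powr (-4) * (\<Sum>k\<in>UNIV. x $ k * partial k w (inv_pt x))"
proof -
  have r: "norm x > 0" using x by simp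
  have "((\<lambda>x. w (inv_pt x)) has_derivative
      (\<lambda>h. \<Sum>j\<in>UNIV. ((1 / (norm x)^2) *\<^sub>R hmap x h) $ j * partial j w (inv_pt x))) (at x)"
    using has_derivative_compose[OF inv_pt_has_derivative[OF x] differentiable_partials[OF w]]
    by (simp add: o_def)
  from partial_has_derivative[OF this, of i]
  have "partial i (\<lambda>x. w (inv_pt x)) x =
     (\<Sum>j\<in>UNIV. ((1 / (norm x)^2) *\<^sub>R hmap x (axis i 1)) $ j * partial j w (inv_pt x))" .
  also have "\<dots> = (\<Sum>j\<in>UNIV. (1 / (norm x)^2) * (axis i 1 $ j * partial j w (inv_pt x))
        - (2 * x $ i / (norm x)^4) * (x $ j * partial j w (inv_pt x)))"
    by (rule sum.cong) (auto simp: hmap_def inner_axis inner_axis' algebra_simps power2_eq_square power4_eq_xxxx)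
  also have "\<dots> = (1 / (norm x)^2) * (\<Sum>j\<in>UNIV. axis i 1 $ j * partial j w (inv_pt x))
        - (2 * x $ i / (norm x)^4) * (\<Sum>k\<in>UNIV. x $ k * partial k w (inv_pt x))"
    by (simp only: sum_subtractf sum_distrib_left)
  also have "\<dots> = (1 / (norm x)^2) * partial i w (inv_pt x)
        - (2 * x $ i / (norm x)^4) * (\<Sum>k\<in>UNIV. x $ k * partial k w (inv_pt x))"
    by (simp only: sum_axis_left)
  also have "1 / (norm x)^2 = norm x powr (-2)" using r by (simp add: powr_minus_divide powr_numeral)
  also have "2 * x $ i / (norm x)^4 = 2 * x $ i * norm x powr (-4)"
    using r by (simp add: powr_minus_divide powr_numeral divide_inverse)
  finally show ?thesis by simp
qed



lemma iter_partial_append: "iter_partial (is @ [i]) f = iter_partial is (partial i f)"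
  by (induction "is") auto

lemma smooth_differentiable: "smooth f \<Longrightarrow> f differentiable (at x)"
  unfolding smooth_def using iter_partial.simps(1) by metis

lemma smooth_partial: "smooth f \<Longrightarrow> smooth (partial i f)"
  unfolding smooth_def by (metis iter_partial_append)

lemma smooth_iter_partial: "smooth f \<Longrightarrow> smooth (iter_partial is f)"
  by (induction "is") (auto intro: smooth_partial)

definition sm :: "(real^'n::finite) set \<Rightarrow> (real^'n \<Rightarrow> real) \<Rightarrow> bool" where
  "sm U f \<longleftrightarrow> (\<forall>is. \<forall>x\<in>U. iter_partial is f differentiable (at x))"

lemma differentiable_transform_open:
  "f differentiable (at x) \<Longrightarrow> open U \<Longrightarrow> x \<in> U \<Longrightarrow> (\<And>y. y \<in> U \<Longrightarrow> f y = g y) \<Longrightarrow> g differentiable (at x)"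
  unfolding differentiable_def using has_derivative_transform_within_open by blast

inductive_set alg :: "(real^'n::finite \<Rightarrow> real) set \<Rightarrow> (real^'n \<Rightarrow> real) set" for G where
  gen: "g \<in> G \<Longrightarrow> g \<in> alg G"
| cst: "(\<lambda>x. c) \<in> alg G"
| add: "f \<in> alg G \<Longrightarrow> g \<in> alg G \<Longrightarrow> (\<lambda>x. f x + g x) \<in> alg G"
| mul: "f \<in> alg G \<Longrightarrow> g \<in> alg G \<Longrightarrow> (\<lambda>x. f x * g x) \<in> alg G"

lemma alg_diff: "f \<in> alg G \<Longrightarrow> g \<in> alg G \<Longrightarrow> (\<lambda>x. f x - g x) \<in> alg G"
proof -
  assume f: "f \<in> alg G" and g: "g \<in> alg G"
  have "(\<lambda>x. f x + (\<lambda>x. -1) x * g x) \<in> alg G" by (intro alg.add alg.mul alg.cst f g)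
  then show ?thesis by simp
qed

lemma alg_sum: "finite S \<Longrightarrow> (\<And>k. k \<in> S \<Longrightarrow> f k \<in> alg G) \<Longrightarrow> (\<lambda>x. \<Sum>k\<in>S. f k x) \<in> alg G"
proof (induction S rule: finite_induct)
  case empty
  then show ?case using alg.cst[of 0] by simp
next
  case (insert a S)
  then have "(\<lambda>x. f a x + (\<Sum>k\<in>S. f k x)) \<in> alg G" by (intro alg.add) auto
  then show ?case using insert by simp
qed

locale alg_hyp =
  fixes U :: "(real^'n::finite) set" and G
  assumes U: "open U"
    and G: "\<And>g. g \<in> G \<Longrightarrow> (\<forall>x\<in>U. g differentiable (at x)) \<and> (\<forall>i. \<exists>h\<in>alg G. \<forall>x\<in>U. partial i g x = h x)"
begin

lemma closed: "f \<in> alg G \<Longrightarrow> (\<forall>x\<in>U. f differentiable (at x)) \<and> (\<forall>i. \<exists>h\<in>alg G. \<forall>x\<in>U. partial i f x = h x)"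
proof (induction rule: alg.induct)
  case (gen g)
  then show ?case using G by blast
next
  case (cst c)
  then show ?case by (auto simp: partial_const intro!: bexI[OF _ alg.cst])
next
  case (add f g)
  show ?case
  proof (intro conjI ballI allI)
    fix x assume "x \<in> U" then show "(\<lambda>x. f x + g x) differentiable (at x)"
      using add by (auto intro: differentiable_add)
  next
    fix i
    obtain hf hg where "hf \<in> alg G" "\<forall>x\<in>U. partial i f x = hf x" "hg \<in> alg G" "\<forall>x\<in>U. partial i g x = hg x"
      using add by blast
    then show "\<exists>h\<in>alg G. \<forall>x\<in>U. partial i (\<lambda>x. f x + g x) x = h x"
      using add by (intro bexI[of _ "\<lambda>x. hf x + hg x"]) (auto simp: partial_add intro: alg.add)
  qed
next
  case (mul f g)
  show ?case
  proof (intro conjI ballI allI)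
    fix x assume "x \<in> U" then show "(\<lambda>x. f x * g x) differentiable (at x)"
      using mul by (auto intro: differentiable_mult)
  next
    fix i
    obtain hf hg where "hf \<in> alg G" "\<forall>x\<in>U. partial i f x = hf x" "hg \<in> alg G" "\<forall>x\<in>U. partial i g x = hg x"
      using mul by blast
    then show "\<exists>h\<in>alg G. \<forall>x\<in>U. partial i (\<lambda>x. f x * g x) x = h x"
      using mul by (intro bexI[of _ "\<lambda>x. hf x * g x + f x * hg x"]) (auto simp: partial_mult intro: alg.add alg.mul)
  qed
qed

lemma iter: "g \<in> alg G \<Longrightarrow> \<exists>h\<in>alg G. \<forall>x\<in>U. iter_partial is g x = h x"
proof (induction "is")
  case Nil
  then show ?case by auto
next
  case (Cons i "is")
  then obtain h where h: "h \<in> alg G" "\<forall>x\<in>U. iter_partial is g x = h x" by blast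
  then obtain h' where h': "h' \<in> alg G" "\<forall>x\<in>U. partial i h x = h' x" using closed by blast
  have "\<forall>x\<in>U. iter_partial (i # is) g x = h' x"
  proof
    fix x assume x: "x \<in> U"
    have "iter_partial (i # is) g x = partial i h x"
      using partial_cong[OF U x, of "iter_partial is g" h i] h by simp
    then show "iter_partial (i # is) g x = h' x" using h' x by simp
  qed
  then show ?case using h' by blast
qed

lemma sm: "g \<in> alg G \<Longrightarrow> sm U g"
  unfolding sm_def
proof (intro allI ballI)
  fix "is" x assume g: "g \<in> alg G" and x: "x \<in> U"
  obtain h where h: "h \<in> alg G" "\<forall>x\<in>U. iter_partial is g x = h x" using iter[OF g] by blast
  have "h differentiable (at x)" using closed[OF h(1)] x by blast
  then show "iter_partial is g differentiable (at x)"
    by (rule differentiable_transform_open[OF _ U x]) (use h in auto)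
qed

end

lemma iter_partial_zero_open:
  assumes "open V" "\<And>y. y \<in> V \<Longrightarrow> f y = 0" "x \<in> V"
  shows "iter_partial is f x = 0"
  using assms(3)
proof (induction "is" arbitrary: x)
  case Nil
  then show ?case using assms by simp
next
  case (Cons i "is")
  have "partial i (iter_partial is f) x = partial i (\<lambda>x. 0) x"
    by (rule partial_cong[OF assms(1) Cons.prems]) (use Cons.IH in auto)
  then show ?case by (simp add: partial_const)
qed

lemma sm_smooth:
  assumes "sm (-{0}) f" "e > 0" "\<And>y. norm y < e \<Longrightarrow> f y = 0"
  shows "smooth f"
  unfolding smooth_def
proof (intro allI)
  fix "is" and x :: "real^'a"
  show "iter_partial is f differentiable (at x)"
  proof (cases "x = 0")
    case True
    have z: "\<And>y. y \<in> ball 0 e \<Longrightarrow> iter_partial is f y = 0"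
      by (rule iter_partial_zero_open[of "ball 0 e"]) (use assms in auto)
    have "(\<lambda>_. 0::real) differentiable (at x)" by simp
    then show ?thesis
      by (rule differentiable_transform_open[of _ _ "ball 0 e"]) (use z True assms(2) in auto)
  next
    case False
    then show ?thesis using assms(1) by (auto simp: sm_def)
  qed
qed



definition kelvin :: "(real^'n::finite \<Rightarrow> real) \<Rightarrow> real^'n \<Rightarrow> real" where
  "kelvin u x = norm x powr (2 - real CARD('n)) * u (inv_pt x)"

lemma kelvin_sm:
  fixes u :: "real^'n::finite \<Rightarrow> real"
  assumes u: "smooth u"
  shows "sm (-{0}) (kelvin u)"
proof -
  define G :: "(real^'n \<Rightarrow> real) set" where
    "G = range (\<lambda>j x. x $ j) \<union> range (\<lambda>s x. norm x powr s) \<union> range (\<lambda>is x. iter_partial is u (inv_pt x))"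
  have coord: "(\<lambda>x. x $ j) \<in> alg G" for j unfolding G_def by (intro alg.gen) auto
  have pw: "(\<lambda>x. norm x powr s) \<in> alg G" for s unfolding G_def by (intro alg.gen) auto
  have cp: "(\<lambda>x. iter_partial is u (inv_pt x)) \<in> alg G" for "is" unfolding G_def by (intro alg.gen) auto
  interpret alg_hyp "-{0}" G
  proof
    show "open (-{0::real^'n})" by auto
  next
    fix g assume "g \<in> G"
    then consider (c) j where "g = (\<lambda>x. x $ j)" | (p) s where "g = (\<lambda>x. norm x powr s)"
      | (k) "is" where "g = (\<lambda>x. iter_partial is u (inv_pt x))"
      unfolding G_def by blast
    then show "(\<forall>x\<in>-{0}. g differentiable (at x)) \<and> (\<forall>i. \<exists>h\<in>alg G. \<forall>x\<in>-{0}. partial i g x = h x)"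
    proof cases
      case c
      show ?thesis unfolding c
      proof (intro conjI ballI allI)
        fix x :: "real^'n" show "(\<lambda>x. x $ j) differentiable (at x)" by (rule differentiable_coord)
      next
        fix i show "\<exists>h\<in>alg G. \<forall>x\<in>-{0}. partial i (\<lambda>x. x $ j) x = h x"
          by (intro bexI[OF _ alg.cst[of "if j = i then 1 else 0"]]) (simp add: partial_coord)
      qed
    next
      case p
      show ?thesis unfolding p
      proof (intro conjI ballI allI)
        fix x :: "real^'n" assume "x \<in> -{0}" then show "(\<lambda>x. norm x powr s) differentiable (at x)"
          by (intro differentiable_powr_norm) auto
      next
        fix i
        have "(\<lambda>x. (\<lambda>x. s) x * (\<lambda>x. norm x powr (s - 2)) x * (\<lambda>x. x $ i) x) \<in> alg G"
          by (intro alg.mul alg.cst pw coord)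
        then show "\<exists>h\<in>alg G. \<forall>x\<in>-{0}. partial i (\<lambda>x. norm x powr s) x = h x"
          by (intro bexI) (auto simp: partial_powr)
      qed
    next
      case k
      have du: "\<And>y. iter_partial is' u differentiable (at y)" for is'
        using smooth_iter_partial[OF u] smooth_differentiable by blast
      show ?thesis unfolding k
      proof (intro conjI ballI allI)
        fix x :: "real^'n" assume "x \<in> -{0}" then show "(\<lambda>x. iter_partial is u (inv_pt x)) differentiable (at x)"
          by (intro differentiable_comp_inv_pt du) auto
      next
        fix i
        have "(\<lambda>x. (\<lambda>x. norm x powr (-2)) x * (\<lambda>x. iter_partial (i # is) u (inv_pt x)) x
           - (\<lambda>x. 2) x * (\<lambda>x. x $ i) x * (\<lambda>x. norm x powr (-4)) x *
             (\<lambda>x. \<Sum>k\<in>UNIV. (\<lambda>k x. x $ k * iter_partial (k # is) u (inv_pt x)) k x) x) \<in> alg G"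
          by (intro alg_diff alg.mul alg.cst pw coord cp alg_sum) auto
        then show "\<exists>h\<in>alg G. \<forall>x\<in>-{0}. partial i (\<lambda>x. iter_partial is u (inv_pt x)) x = h x"
          by (intro bexI) (auto simp: partial_comp_inv_pt du)
      qed
    qed
  qed
  have "kelvin u \<in> alg G"
    unfolding kelvin_def using alg.mul[OF pw cp[of "[]"]] by simp
  then show ?thesis by (rule sm)
qed

lemma test_fun_bounds:
  assumes "test_fun u"
  obtains r R where "0 < r" "0 < R" "\<And>y. u y \<noteq> 0 \<Longrightarrow> r \<le> norm y \<and> norm y \<le> R"
proof -
  have c: "compact (tsupport u)" and z: "0 \<notin> tsupport u" using assms by (auto simp: test_fun_def)
  obtain R where R: "0 < R" "\<And>y. y \<in> tsupport u \<Longrightarrow> norm y \<le> R"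
    using compact_imp_bounded[OF c] bounded_pos by blast
  have "closed (tsupport u)" by (simp add: tsupport_def)
  then have "open (- tsupport u)" by auto
  moreover have "0 \<in> - tsupport u" using z by simp
  ultimately obtain r where r0: "0 < r" "ball 0 r \<subseteq> - tsupport u"
    using open_contains_ball by blast
  then have r: "0 < r" "ball 0 r \<inter> tsupport u = {}" by auto
  have sub: "\<And>y. u y \<noteq> 0 \<Longrightarrow> y \<in> tsupport u" by (simp add: tsupport_def closure_subset[THEN subsetD])
  show ?thesis
  proof (rule that[OF r(1) R(1)])
    fix y assume "u y \<noteq> 0"
    then have "y \<in> tsupport u" by (rule sub)
    moreover have "y \<notin> ball 0 r" using r(2) \<open>y \<in> tsupport u\<close> by blast
    ultimately show "r \<le> norm y \<and> norm y \<le> R" using R by (simp add: dist_norm not_less)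
  qed
qed

lemma test_fun_zero: "test_fun u \<Longrightarrow> u 0 = 0"
proof (rule ccontr)
  assume "test_fun u" "u 0 \<noteq> 0"
  then have "0 \<in> tsupport u" unfolding tsupport_def by (intro closure_subset[THEN subsetD]) simp
  then show False using \<open>test_fun u\<close> by (simp add: test_fun_def)
qed

lemma kelvin_kelvin:
  fixes u :: "real^'n::finite \<Rightarrow> real"
  assumes u0: "u 0 = 0"
  shows "kelvin (kelvin u) = u"
proof
  fix x :: "real^'n"
  show "kelvin (kelvin u) x = u x"
  proof (cases "x = 0")
    case True then show ?thesis using u0 by (simp add: kelvin_def)
  next
    case False
    have "norm x powr (2 - real CARD('n)) * (1 / norm x) powr (2 - real CARD('n)) = (norm x * (1 / norm x)) powr (2 - real CARD('n))"
      by (rule powr_mult[symmetric])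
    also have "\<dots> = 1" using False by simp
    finally have e: "norm x powr (2 - real CARD('n)) * (1 / norm x) powr (2 - real CARD('n)) = 1" .
    have "kelvin (kelvin u) x = (norm x powr (2 - real CARD('n)) * (1 / norm x) powr (2 - real CARD('n))) * u x"
      unfolding kelvin_def norm_inv_pt inv_pt_inv_pt by (simp only: mult.assoc)
    then show ?thesis using e by simp
  qed
qed

lemma kelvin_zero_small:
  assumes "0 < R" "\<And>y. u y \<noteq> 0 \<Longrightarrow> norm y \<le> R" "norm x < 1 / R"
  shows "kelvin u x = 0"
proof (cases "x = 0")
  case True then show ?thesis by (simp add: kelvin_def)
next
  case False
  then have "norm (inv_pt x) > R" using assms(1,3) by (simp add: norm_inv_pt field_simps)
  then show ?thesis using assms(2) by (force simp: kelvin_def)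
qed

lemma kelvin_test_fun:
  fixes u :: "real^'n::finite \<Rightarrow> real"
  assumes u: "test_fun u"
  shows "test_fun (kelvin u)"
proof -
  obtain r R where rR: "0 < r" "0 < R" "\<And>y. u y \<noteq> 0 \<Longrightarrow> r \<le> norm y \<and> norm y \<le> R"
    using test_fun_bounds[OF u] by blast
  have sm: "smooth (kelvin u)"
    by (rule sm_smooth[OF kelvin_sm, where e="1 / R"]) (use u rR in \<open>auto simp: test_fun_def intro: kelvin_zero_small\<close>)
  define A where "A = {x::real^'n. 1 / R \<le> norm x \<and> norm x \<le> 1 / r}"
  have clA: "closed A" unfolding A_def
    by (intro closed_Collect_conj closed_Collect_le continuous_intros)
  have sub: "{x. kelvin u x \<noteq> 0} \<subseteq> A"
  proof
    fix x assume "x \<in> {x. kelvin u x \<noteq> 0}"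
    then have k: "kelvin u x \<noteq> 0" by simp
    then have x: "x \<noteq> 0" by (auto simp: kelvin_def)
    from k have ux: "u (inv_pt x) \<noteq> 0" by (auto simp: kelvin_def)
    from rR(3)[OF ux] have "r \<le> 1 / norm x \<and> 1 / norm x \<le> R" by (simp add: norm_inv_pt)
    then show "x \<in> A" using x rR(1,2) by (auto simp: A_def field_simps)
  qed
  have tA: "tsupport (kelvin u) \<subseteq> A"
    unfolding tsupport_def by (rule closure_minimal[OF sub clA])
  have "bounded A" unfolding A_def bounded_iff by auto
  then have "compact (tsupport (kelvin u))"
    using tA by (simp add: compact_eq_bounded_closed tsupport_def bounded_subset)
  moreover have "0 \<notin> tsupport (kelvin u)" using tA rR(2) by (auto simp: A_def)
  ultimately show ?thesis using sm by (simp add: test_fun_def)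
qed



definition Sf :: "(real^'n::finite \<Rightarrow> real) \<Rightarrow> real^'n \<Rightarrow> real" where
  "Sf u y = (\<Sum>k\<in>UNIV. y $ k * partial k u (inv_pt y))"

lemma sum_delta_right: "(\<Sum>k\<in>UNIV. (f (k::'n::finite)::real) * (if k = i then 1 else 0)) = f i"
proof -
  have "(\<Sum>k\<in>UNIV. (f k::real) * (if k = i then 1 else 0)) = (\<Sum>k\<in>UNIV. if k = i then f k else 0)"
    by (rule sum.cong) auto
  then show ?thesis by simp
qed

lemma smooth_diff2:
  assumes "smooth u"
  shows "u differentiable (at y)" "partial j u differentiable (at y)" "partial k (partial j u) differentiable (at y)"
  using smooth_differentiable smooth_partial assms by blast+

lemma differentiable_Sf:
  assumes u: "smooth u" and x: "x \<noteq> 0"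
  shows "Sf u differentiable (at x)"
proof -
  have "(\<lambda>y. \<Sum>k\<in>UNIV. y $ k * partial k u (inv_pt y)) differentiable (at x)"
    by (intro differentiable_sum ballI differentiable_mult differentiable_coord
        differentiable_comp_inv_pt x smooth_diff2[OF u]) auto
  then show ?thesis by (simp add: Sf_def[abs_def])
qed

lemma partial_Sf:
  assumes u: "smooth u" and x: "x \<noteq> 0"
  shows "partial i (Sf u) x = partial i u (inv_pt x)
     + norm x powr (-2) * (\<Sum>k\<in>UNIV. x $ k * partial i (partial k u) (inv_pt x))
     - 2 * x $ i * norm x powr (-4) * (\<Sum>k\<in>UNIV. x $ k * (\<Sum>l\<in>UNIV. x $ l * partial l (partial k u) (inv_pt x)))"
proof -
  have dk: "\<And>k. (\<lambda>y. y $ k * partial k u (inv_pt y)) differentiable (at x)"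
    by (intro differentiable_mult differentiable_coord differentiable_comp_inv_pt x smooth_diff2[OF u])
  have "partial i (Sf u) x = partial i (\<lambda>y. \<Sum>k\<in>UNIV. y $ k * partial k u (inv_pt y)) x"
    by (simp add: Sf_def[abs_def])
  also have "\<dots> = (\<Sum>k\<in>UNIV. partial i (\<lambda>y. y $ k * partial k u (inv_pt y)) x)"
    by (rule partial_sum) (use dk in auto)
  also have "\<dots> = (\<Sum>k\<in>UNIV. (if k = i then 1 else 0) * partial k u (inv_pt x)
      + x $ k * (norm x powr (-2) * partial i (partial k u) (inv_pt x)
         - 2 * x $ i * norm x powr (-4) * (\<Sum>l\<in>UNIV. x $ l * partial l (partial k u) (inv_pt x))))"
    by (rule sum.cong[OF refl])
       (simp add: partial_mult differentiable_coord differentiable_comp_inv_pt x smooth_diff2[OF u]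
          partial_coord partial_comp_inv_pt)
  also have "\<dots> = partial i u (inv_pt x)
     + norm x powr (-2) * (\<Sum>k\<in>UNIV. x $ k * partial i (partial k u) (inv_pt x))
     - 2 * x $ i * norm x powr (-4) * (\<Sum>k\<in>UNIV. x $ k * (\<Sum>l\<in>UNIV. x $ l * partial l (partial k u) (inv_pt x)))"
    by (simp add: sum.distrib sum_subtractf sum_distrib_left algebra_simps sum_delta_right)
  finally show ?thesis .
qed



lemma lap_kelvin_E:
  fixes u :: "real^'n::finite \<Rightarrow> real" and a :: real and i :: 'n
  assumes u: "smooth u" and x: "x \<noteq> 0"
  defines "r \<equiv> norm x"
  defines "P \<equiv> norm x powr a"
  defines "U0 \<equiv> u (inv_pt x)"
  defines "T \<equiv> Sf u x"
  defines "Q \<equiv> (\<Sum>k\<in>UNIV. x $ k * (\<Sum>l\<in>UNIV. x $ l * partial l (partial k u) (inv_pt x)))"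
  defines "S1 \<equiv> (\<Sum>k\<in>UNIV. x $ k * partial k (partial i u) (inv_pt x))"
  defines "S2 \<equiv> (\<Sum>k\<in>UNIV. x $ k * partial i (partial k u) (inv_pt x))"
  shows "partial i (\<lambda>y. a * norm y powr (a - 2) * y $ i * u (inv_pt y) + norm y powr a * (norm y powr (-2) * partial i u (inv_pt y) - 2 * y $ i * norm y powr (-4) * Sf u y)) x
    = (a*(a-2)*P*U0/r^4 - 2*a*P*T/r^6 - 2*(a-4)*P*T/r^6 + 4*P*Q/r^8) * (x$i)^2
      + (a*P*U0/r^2 - 2*P*T/r^4)
      + ((2*a - 4)*P/r^4) * (x$i * partial i u (inv_pt x))
      + (P/r^4) * partial i (partial i u) (inv_pt x)
      + (-2*P/r^6) * (x$i * S1) + (-2*P/r^6) * (x$i * S2)"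
proof -
  have r: "r > 0" using x by (simp add: r_def)
  have c1: "r powr (a - 2) = P / r^2" using r by (simp add: r_def P_def powr_diff powr_numeral)
  have c2: "r powr (a - 2 - 2) = P / r^4" using r by (simp add: r_def P_def powr_diff powr_numeral)
  have c2': "r powr (a - 4) = P / r^4" using r by (simp add: r_def P_def powr_diff powr_numeral)
  have c3: "r powr (-2) = 1 / r^2" using r by (simp add: powr_minus_divide powr_numeral)
  have c4: "r powr (-4) = 1 / r^4" using r by (simp add: powr_minus_divide powr_numeral)
  have c5: "r powr (-6) = 1 / r^6" using r by (simp add: powr_minus_divide powr_numeral)
  have c6: "r powr (-2-2) = 1 / r^4" using c4 by simp
  have c7: "r powr (-4-2) = 1 / r^6" using c5 by simp
  have cP: "r powr a = P" by (simp add: r_def P_def)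
  have cT: "(\<Sum>k\<in>UNIV. x $ k * partial k u (inv_pt x)) = T" by (simp add: T_def Sf_def)
  note dd = differentiable_mult differentiable_add differentiable_diff differentiable_const differentiable_coord
     differentiable_powr_norm differentiable_comp_inv_pt smooth_diff2[OF u] differentiable_Sf[OF u]
  show ?thesis
    apply (simp add: partial_mult partial_add partial_diff partial_const partial_coord partial_powr
        partial_comp_inv_pt partial_Sf[OF u] x dd)
    apply (simp only: flip: P_def r_def U0_def T_def Q_def S1_def S2_def)
    apply (simp only: c1 c2 c2' c3 c4 c5 c6 c7 cT cP)
    using r apply (simp add: field_simps)
    apply algebra
    done
qed

lemma sum_sq_norm: "(\<Sum>i\<in>UNIV. (x $ i)^2) = (norm (x::real^'n::finite))^2"
  by (simp add: norm_vec_def L2_set_def sum_nonneg)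

lemma lap_kelvin:
  fixes u :: "real^'n::finite \<Rightarrow> real"
  assumes u: "smooth u" and x: "x \<noteq> 0"
  shows "laplacian (kelvin u) x = norm x powr (-2 - real CARD('n)) * laplacian u (inv_pt x)"
proof -
  define a where "a = 2 - real CARD('n)"
  define r where "r = norm x"
  define P where "P = norm x powr a"
  define U0 where "U0 = u (inv_pt x)"
  define T where "T = Sf u x"
  define Q where "Q = (\<Sum>k\<in>UNIV. x $ k * (\<Sum>l\<in>UNIV. x $ l * partial l (partial k u) (inv_pt x)))"
  define L where "L = (\<Sum>i\<in>UNIV. partial i (partial i u) (inv_pt x))"
  have r: "r > 0" using x by (simp add: r_def)
  have kel: "kelvin u = (\<lambda>y. norm y powr a * u (inv_pt y))" by (simp add: kelvin_def a_def fun_eq_iff)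
  define A where "A i y = a * norm y powr (a - 2) * y $ i * u (inv_pt y) + norm y powr a * (norm y powr (-2) * partial i u (inv_pt y) - 2 * y $ i * norm y powr (-4) * Sf u y)" for i y
  have pA: "partial i (kelvin u) y = A i y" if y: "y \<noteq> 0" for i y
    unfolding kel A_def
    by (simp add: partial_mult differentiable_powr_norm differentiable_comp_inv_pt smooth_diff2[OF u]
        partial_powr partial_comp_inv_pt Sf_def y)
  have ppA: "partial i (partial i (kelvin u)) x = partial i (A i) x" for i
    by (rule partial_cong[of "-{0}"]) (use x pA in auto)
  have E: "partial i (A i) x =
      (a*(a-2)*P*U0/r^4 - 2*a*P*T/r^6 - 2*(a-4)*P*T/r^6 + 4*P*Q/r^8) * (x$i)^2
      + (a*P*U0/r^2 - 2*P*T/r^4)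
      + ((2*a - 4)*P/r^4) * (x$i * partial i u (inv_pt x))
      + (P/r^4) * partial i (partial i u) (inv_pt x)
      + (-2*P/r^6) * (x$i * (\<Sum>k\<in>UNIV. x $ k * partial k (partial i u) (inv_pt x)))
      + (-2*P/r^6) * (x$i * (\<Sum>k\<in>UNIV. x $ k * partial i (partial k u) (inv_pt x)))" for i
    unfolding A_def r_def P_def U0_def T_def Q_def by (rule lap_kelvin_E[OF u x])
  have s1: "(\<Sum>i\<in>UNIV. x$i * (\<Sum>k\<in>UNIV. x $ k * partial k (partial i u) (inv_pt x))) = Q"
    by (simp add: Q_def)
  have s2: "(\<Sum>i\<in>UNIV. x$i * (\<Sum>k\<in>UNIV. x $ k * partial i (partial k u) (inv_pt x))) = Q"
    unfolding Q_def sum_distrib_left by (subst sum.swap) (simp add: mult.left_commute)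
  have s3: "(\<Sum>i\<in>UNIV. x$i * partial i u (inv_pt x)) = T" by (simp add: T_def Sf_def)
  have s4: "(\<Sum>i\<in>UNIV. (x$i)^2) = r^2" by (simp add: r_def sum_sq_norm)
  have "laplacian (kelvin u) x = (\<Sum>i\<in>UNIV. partial i (A i) x)"
    by (simp add: laplacian_def ppA)
  also have "\<dots> = (a*(a-2)*P*U0/r^4 - 2*a*P*T/r^6 - 2*(a-4)*P*T/r^6 + 4*P*Q/r^8) * (\<Sum>i\<in>UNIV. (x$i)^2)
      + real CARD('n) * (a*P*U0/r^2 - 2*P*T/r^4)
      + ((2*a - 4)*P/r^4) * (\<Sum>i\<in>UNIV. x$i * partial i u (inv_pt x))
      + (P/r^4) * L
      + (-2*P/r^6) * (\<Sum>i\<in>UNIV. x$i * (\<Sum>k\<in>UNIV. x $ k * partial k (partial i u) (inv_pt x)))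
      + (-2*P/r^6) * (\<Sum>i\<in>UNIV. x$i * (\<Sum>k\<in>UNIV. x $ k * partial i (partial k u) (inv_pt x)))"
    unfolding E L_def by (simp only: sum.distrib sum_distrib_left sum_constant)
  also have "\<dots> = (a*(a-2)*P*U0/r^4 - 2*a*P*T/r^6 - 2*(a-4)*P*T/r^6 + 4*P*Q/r^8) * r^2
      + real CARD('n) * (a*P*U0/r^2 - 2*P*T/r^4)
      + ((2*a - 4)*P/r^4) * T + (P/r^4) * L + (-2*P/r^6) * Q + (-2*P/r^6) * Q"
    by (simp only: s1 s2 s3 s4)
  also have "\<dots> = P / r^4 * L"
    using r unfolding a_def by (simp add: field_simps) algebra?
  also have "P / r^4 = norm x powr (-2 - real CARD('n))"
  proof -
    have "P / r^4 = norm x powr a / norm x powr 4" using r by (simp add: P_def r_def powr_numeral)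
    also have "\<dots> = norm x powr (a - 4)" by (rule powr_diff[symmetric])
    also have "a - 4 = -2 - real CARD('n)" by (simp add: a_def)
    finally show ?thesis .
  qed
  finally show ?thesis by (simp add: L_def laplacian_def)
qed



lemma Lp_transfer:
  fixes F G :: "real^'n::finite \<Rightarrow> real"
  assumes p: "1 \<le> p" and G[measurable]: "G \<in> borel_measurable borel" and G0: "G 0 = 0"
    and FG: "\<And>x. F x = norm x powr (- real CARD('n) * real_of_ereal (2 / p)) * G (inv_pt x)"
  shows "Lp_norm p F = Lp_norm p G"
proof (cases p)
  case PInf
  then have FG': "F = G \<circ> inv_pt"
  proof -
    have "F x = G (inv_pt x)" for x
      using FG[of x] PInf G0 by (cases "x = 0") auto
    then show ?thesis by (simp add: fun_eq_iff)
  qed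
  have r: "range inv_pt = (UNIV :: (real^'n) set)"
    by (rule surjI[of _ inv_pt]) simp
  have "(SUP x. \<bar>F x\<bar>) = (SUP y. \<bar>G y\<bar>)"
  proof -
    have "(SUP x. \<bar>G (inv_pt x)\<bar>) = (SUP y\<in>range inv_pt. \<bar>G y\<bar>)" by (simp add: image_image)
    then show ?thesis unfolding FG' o_def r .
  qed
  then show ?thesis using PInf by (simp add: Lp_norm_def)
next
  case (real q)
  then have q: "q \<ge> 1" using p by simp
  have e: "real_of_ereal (2 / p) = 2 / q" using real q by simp
  have pt: "\<bar>F x\<bar> powr q = norm x powr (- 2 * real CARD('n)) * \<bar>G (inv_pt x)\<bar> powr q" for x
  proof -
    have "\<bar>F x\<bar> = norm x powr (- real CARD('n) * (2 / q)) * \<bar>G (inv_pt x)\<bar>"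
      using FG[of x] e by (simp add: abs_mult)
    then have "\<bar>F x\<bar> powr q = (norm x powr (- real CARD('n) * (2 / q))) powr q * \<bar>G (inv_pt x)\<bar> powr q"
      by (simp add: powr_mult)
    also have "(norm x powr (- real CARD('n) * (2 / q))) powr q = norm x powr (- 2 * real CARD('n))"
      using q by (simp add: powr_powr mult.commute)
    finally show ?thesis .
  qed
  have "(LINT x|lborel. \<bar>F x\<bar> powr q) = (LINT x|lborel. norm x powr (- 2 * real CARD('n)) * \<bar>G (inv_pt x)\<bar> powr q)"
    by (simp add: pt)
  also have "\<dots> = enn2real (\<integral>\<^sup>+x. ennreal (norm x powr (- 2 * real CARD('n)) * \<bar>G (inv_pt x)\<bar> powr q) \<partial>lborel)"
    by (rule integral_eq_nn_integral) auto
  also have "(\<integral>\<^sup>+x. ennreal (norm x powr (- 2 * real CARD('n)) * \<bar>G (inv_pt x)\<bar> powr q) \<partial>lborel)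
      = (\<integral>\<^sup>+x. ennreal (norm x powr (- 2 * real CARD('n))) * (\<lambda>y. ennreal (\<bar>G y\<bar> powr q)) (inv_pt x) \<partial>lborel)"
    by (simp add: ennreal_mult)
  also have "\<dots> = (\<integral>\<^sup>+y. ennreal (\<bar>G y\<bar> powr q) \<partial>lborel)"
    by (rule kelvin_nn) measurable
  also have "enn2real \<dots> = (LINT y|lborel. \<bar>G y\<bar> powr q)"
    by (rule integral_eq_nn_integral[symmetric]) auto
  finally show ?thesis using real by (simp add: Lp_norm_def)
next
  case MInf
  then show ?thesis using p by simp
qed

lemma differentiable_measurable:
  "(\<And>x. f differentiable (at x)) \<Longrightarrow> (f :: real^'n::finite \<Rightarrow> real) \<in> borel_measurable borel"
  by (intro borel_measurable_continuous_onI differentiable_imp_continuous_on)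
     (simp add: differentiable_on_def differentiable_at_withinI)

lemma lap_kelvin_0:
  fixes u :: "real^'n::finite \<Rightarrow> real"
  assumes u: "test_fun u"
  shows "laplacian (kelvin u) 0 = 0"
proof -
  obtain r R where rR: "0 < r" "0 < R" "\<And>y. u y \<noteq> 0 \<Longrightarrow> r \<le> norm y \<and> norm y \<le> R"
    using test_fun_bounds[OF u] by blast
  have "iter_partial [i, i] (kelvin u) 0 = 0" for i
    by (rule iter_partial_zero_open[of "ball 0 (1 / R)"]) (use rR in \<open>auto intro: kelvin_zero_small\<close>)
  then show ?thesis by (simp add: laplacian_def)
qed



lemma powr_inv_norm: "x \<noteq> 0 \<Longrightarrow> (1 / norm x) powr a = norm x powr (- a)"
  by (simp add: powr_minus_divide powr_divide)

lemma laplacian_measurable: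
  fixes u :: "real^'n::finite \<Rightarrow> real"
  assumes "smooth u"
  shows "laplacian u \<in> borel_measurable borel"
proof -
  have "(\<lambda>x. \<Sum>i\<in>UNIV. partial i (partial i u) x) differentiable (at x)" for x
    by (intro differentiable_sum ballI smooth_diff2[OF assms]) auto
  then show ?thesis unfolding laplacian_def[abs_def] by (rule differentiable_measurable)
qed

lemma transfer_rellich:
  fixes \<alpha> \<beta> C :: real and p :: ereal
  assumes p: "1 \<le> p" and b: "\<beta> = 2 - \<alpha> + real CARD('n::finite) * (1 - real_of_ereal (2 / p))"
    and R: "rellich_ineq TYPE('n) p \<alpha> C"
  shows "rellich_ineq TYPE('n) p \<beta> C"
  unfolding rellich_ineq_def
proof (intro allI impI)
  fix v :: "real^'n \<Rightarrow> real"
  assume v: "test_fun v"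
  define u where "u = kelvin v"
  have u: "test_fun u" unfolding u_def by (rule kelvin_test_fun[OF v])
  have vu: "v = kelvin u" unfolding u_def using kelvin_kelvin[of v, OF test_fun_zero[OF v]] by simp
  have us: "smooth u" using u by (simp add: test_fun_def)
  define e where "e = real_of_ereal (2 / p)"
  have b': "\<beta> = 2 - \<alpha> + real CARD('n) * (1 - e)" using b by (simp add: e_def)
  have 1: "Lp_norm p (\<lambda>x. norm x powr \<beta> * laplacian v x) = Lp_norm p (\<lambda>x. norm x powr \<alpha> * laplacian u x)"
  proof (rule Lp_transfer[OF p])
    show "(\<lambda>x. norm x powr \<alpha> * laplacian u x) \<in> borel_measurable borel"
      using laplacian_measurable[OF us] by measurable
    show "norm (0::real^'n) powr \<alpha> * laplacian u 0 = 0" by simp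
    fix x :: "real^'n"
    show "norm x powr \<beta> * laplacian v x =
      norm x powr (- real CARD('n) * real_of_ereal (2 / p)) * (norm (inv_pt x) powr \<alpha> * laplacian u (inv_pt x))"
    proof (cases "x = 0")
      case True then show ?thesis by simp
    next
      case False
      have "norm x powr \<beta> * laplacian v x = norm x powr \<beta> * norm x powr (-2 - real CARD('n)) * laplacian u (inv_pt x)"
        unfolding vu using lap_kelvin[OF us False] by simp
      also have "\<dots> = norm x powr (\<beta> + (-2 - real CARD('n))) * laplacian u (inv_pt x)"
        by (simp add: powr_add)
      also have "\<beta> + (-2 - real CARD('n)) = - real CARD('n) * e + - \<alpha>" using b' by (simp add: algebra_simps)
      also have "norm x powr (- real CARD('n) * e + - \<alpha>) = norm x powr (- real CARD('n) * e) * norm (inv_pt x) powr \<alpha>"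
        by (simp only: powr_add norm_inv_pt powr_inv_norm[OF False])
      finally show ?thesis by (simp add: e_def)
    qed
  qed
  have 2: "Lp_norm p (\<lambda>x. norm x powr (\<beta> - 2) * v x) = Lp_norm p (\<lambda>x. norm x powr (\<alpha> - 2) * u x)"
  proof (rule Lp_transfer[OF p])
    show "(\<lambda>x. norm x powr (\<alpha> - 2) * u x) \<in> borel_measurable borel"
      using differentiable_measurable[OF smooth_differentiable[OF us]] by measurable
    show "norm (0::real^'n) powr (\<alpha> - 2) * u 0 = 0" by simp
    fix x :: "real^'n"
    show "norm x powr (\<beta> - 2) * v x =
      norm x powr (- real CARD('n) * real_of_ereal (2 / p)) * (norm (inv_pt x) powr (\<alpha> - 2) * u (inv_pt x))"
    proof (cases "x = 0")
      case True then show ?thesis by simp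
    next
      case False
      have "norm x powr (\<beta> - 2) * v x = norm x powr (\<beta> - 2) * norm x powr (2 - real CARD('n)) * u (inv_pt x)"
        unfolding vu by (simp add: kelvin_def)
      also have "\<dots> = norm x powr ((\<beta> - 2) + (2 - real CARD('n))) * u (inv_pt x)"
        by (simp only: powr_add)
      also have "(\<beta> - 2) + (2 - real CARD('n)) = - real CARD('n) * e + - (\<alpha> - 2)" using b' by (simp add: algebra_simps)
      also have "norm x powr (- real CARD('n) * e + - (\<alpha> - 2)) = norm x powr (- real CARD('n) * e) * norm (inv_pt x) powr (\<alpha> - 2)"
        by (simp only: powr_add norm_inv_pt powr_inv_norm[OF False])
      finally show ?thesis by (simp add: e_def)
    qed
  qed
  have "Lp_norm p (\<lambda>x. norm x powr \<alpha> * laplacian u x) \<ge> C * Lp_norm p (\<lambda>x. norm x powr (\<alpha> - 2) * u x)"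
    using R u by (simp add: rellich_ineq_def)
  then show "Lp_norm p (\<lambda>x. norm x powr \<beta> * laplacian v x) \<ge> C * Lp_norm p (\<lambda>x. norm x powr (\<beta> - 2) * v x)"
    using 1 2 by simp
qed

theorem mainTheorem4:
  fixes p :: ereal and \<alpha> \<beta> :: real
  assumes "CARD('n::finite) \<ge> 3"
    and "1 \<le> p"
    and "\<beta> = 2 - \<alpha> + real CARD('n) * (1 - real_of_ereal (2 / p))"
  shows "((\<exists>C>0. rellich_ineq TYPE('n) p \<alpha> C) \<longleftrightarrow> (\<exists>C>0. rellich_ineq TYPE('n) p \<beta> C))
       \<and> best_const TYPE('n) p \<alpha> = best_const TYPE('n) p \<beta>"
proof -
  have a: "\<alpha> = 2 - \<beta> + real CARD('n) * (1 - real_of_ereal (2 / p))" using assms(3) by simp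
  have eq: "rellich_ineq TYPE('n) p \<alpha> C \<longleftrightarrow> rellich_ineq TYPE('n) p \<beta> C" for C
    using transfer_rellich[OF assms(2) assms(3)] transfer_rellich[OF assms(2) a] by blast
  show ?thesis by (simp add: eq best_const_def)
qed


end
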